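(* Let $n$ be a positive integer and let $\mathcal{B}$ be a balanced bipartite graph on $2n$ vertices with parts $V_1$ and $V_2$. If $\delta(\mathcal{B})\geq \frac{n}{2}+1$, then $f(\mathcal{B})=n+1$.
   Context: All graphs are finite and simple. A balanced bipartite graph on $2n$ vertices is a bipartite graph with a given bipartition $(V_1,V_2)$ where $|V_1|=|V_2|=n$ (every edge joins a vertex of $V_1$ to a vertex of $V_2$). $\delta(G)$ denotes the minimum degree of $G$. For $S\subseteq V(G)$, $G[S]$ denotes the induced subgraph on $S$. The forest number $f(G)$ is the maximum cardinality of a subset $S\subseteq V(G)$ such that $G[S]$ is a forest (acyclic). *)

theory Defs
  imports Main
begin

definition simple_graph :: "'a set \<Rightarrow> ('a \<Rightarrow> 'a \<Rightarrow> bool) \<Rightarrow> bool" where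
  "simple_graph V E \<longleftrightarrow> finite V \<and> (\<forall>x y. E x y \<longrightarrow> E y x) \<and> (\<forall>x. \<not> E x x)
     \<and> (\<forall>x y. E x y \<longrightarrow> x \<in> V \<and> y \<in> V)"

definition balanced_bipartite ::
  "nat \<Rightarrow> 'a set \<Rightarrow> 'a set \<Rightarrow> ('a \<Rightarrow> 'a \<Rightarrow> bool) \<Rightarrow> bool" where
  "balanced_bipartite n V1 V2 E \<longleftrightarrow> simple_graph (V1 \<union> V2) E \<and> V1 \<inter> V2 = {}
     \<and> card V1 = n \<and> card V2 = n
     \<and> (\<forall>x y. E x y \<longrightarrow> (x \<in> V1 \<and> y \<in> V2) \<or> (x \<in> V2 \<and> y \<in> V1))"

definition degree :: "'a set \<Rightarrow> ('a \<Rightarrow> 'a \<Rightarrow> bool) \<Rightarrow> 'a \<Rightarrow> nat" where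
  "degree V E v = card {u \<in> V. E v u}"

definition min_degree :: "'a set \<Rightarrow> ('a \<Rightarrow> 'a \<Rightarrow> bool) \<Rightarrow> nat" where
  "min_degree V E = Min (degree V E ` V)"

definition is_cycle :: "'a set \<Rightarrow> ('a \<Rightarrow> 'a \<Rightarrow> bool) \<Rightarrow> 'a list \<Rightarrow> bool" where
  "is_cycle V E cs \<longleftrightarrow> length cs \<ge> 3 \<and> distinct cs \<and> set cs \<subseteq> V
     \<and> (\<forall>i < length cs - 1. E (cs ! i) (cs ! Suc i)) \<and> E (last cs) (hd cs)"

text \<open>The induced subgraph G[S] is a forest iff it contains no cycle; cycles of
  G[S] are exactly the cycles of G whose vertices lie in S.\<close>
definition induces_forest :: "'a set \<Rightarrow> ('a \<Rightarrow> 'a \<Rightarrow> bool) \<Rightarrow> 'a set \<Rightarrow> bool" where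
  "induces_forest V E S \<longleftrightarrow> S \<subseteq> V \<and> \<not> (\<exists>cs. is_cycle S E cs)"

definition forest_number :: "'a set \<Rightarrow> ('a \<Rightarrow> 'a \<Rightarrow> bool) \<Rightarrow> nat" where
  "forest_number V E = Max (card ` {S. induces_forest V E S})"

end

theory Submission
  imports Defs
begin

lemma cycle_mono: "is_cycle T E cs \<Longrightarrow> T \<subseteq> A \<Longrightarrow> is_cycle A E cs"
  unfolding is_cycle_def by blast

lemma cycle_exists:
  assumes fin: "finite S" and ne: "S \<noteq> {}" and sym: "\<forall>x y. E x y \<longrightarrow> E y x"
    and irr: "\<forall>x. \<not> E x x"
    and deg2: "\<forall>v\<in>S. \<exists>u w. u\<in>S \<and> w\<in>S \<and> u\<noteq>w \<and> E v u \<and> E v w"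
  shows "\<exists>cs. is_cycle S E cs"
proof -
  define path where "path p \<longleftrightarrow> p \<noteq> [] \<and> distinct p \<and> set p \<subseteq> S \<and> (\<forall>i < length p - 1. E (p!i) (p!Suc i))" for p
  obtain s where s: "s \<in> S" using ne by blast
  have p1: "path [s]" using s unfolding path_def by simp
  have bound: "\<forall>p. path p \<longrightarrow> length p < card S + 1"
  proof (intro allI impI)
    fix p assume "path p"
    then have "distinct p" "set p \<subseteq> S" unfolding path_def by auto
    then have "card (set p) \<le> card S" using card_mono[OF fin] by blast
    then show "length p < card S + 1" using distinct_card[OF \<open>distinct p\<close>] by simp
  qed
  obtain p where pp: "path p" and pmax: "\<forall>q. path q \<longrightarrow> length q \<le> length p"
    using Lattices_Big.ex_has_greatest_nat[of path "[s]" length "card S + 1", OF p1 bound] by blast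
  have pne: "p \<noteq> []" and pd: "distinct p" and ps: "set p \<subseteq> S"
    and pe: "\<forall>i < length p - 1. E (p!i) (p!Suc i)" using pp unfolding path_def by auto
  have nb: "u \<in> set p" if u: "u \<in> S" "E (hd p) u" for u
  proof (rule ccontr)
    assume un: "u \<notin> set p"
    have "path (u # p)" unfolding path_def
    proof (intro conjI allI impI)
      show "distinct (u # p)" using un pd by simp
      show "set (u # p) \<subseteq> S" using u ps by simp
      fix i assume i: "i < length (u # p) - 1"
      show "E ((u # p) ! i) ((u # p) ! Suc i)"
      proof (cases i)
        case 0
        then show ?thesis using sym u(2) pne by (simp add: hd_conv_nth)
      next
        case (Suc j)
        then show ?thesis using pe i by simp
      qed
    qed simp
    then show False using pmax by fastforce
  qed
  have hS: "hd p \<in> S" using pne ps by auto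
  obtain u w where uw: "u\<in>S" "w\<in>S" "u\<noteq>w" "E (hd p) u" "E (hd p) w" using deg2 hS by blast
  obtain j where j: "j < length p" "p ! j = u" using nb[OF uw(1) uw(4)] by (meson in_set_conv_nth)
  obtain k where k: "k < length p" "p ! k = w" using nb[OF uw(2) uw(5)] by (meson in_set_conv_nth)
  have h0: "hd p = p ! 0" using pne by (simp add: hd_conv_nth)
  have "j \<noteq> 0" using j uw(4) irr h0 by (metis)
  moreover have "k \<noteq> 0" using k uw(5) irr h0 by (metis)
  moreover have "j \<noteq> k" using j k uw(3) by auto
  ultimately obtain J where J: "J \<ge> 2" "J < length p" "E (p!0) (p!J)"
    using j k uw h0 by (metis One_nat_def less_2_cases not_less)
  have "is_cycle S E (take (Suc J) p)"
    unfolding is_cycle_def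
  proof (intro conjI allI impI)
    show "3 \<le> length (take (Suc J) p)" using J by simp
    show "distinct (take (Suc J) p)" using pd by simp
    show "set (take (Suc J) p) \<subseteq> S" using ps set_take_subset by fastforce
    fix i assume i: "i < length (take (Suc J) p) - 1"
    then show "E (take (Suc J) p ! i) (take (Suc J) p ! Suc i)" using pe J by simp
  next
    have "last (take (Suc J) p) = p ! J" using J by (simp add: take_Suc_conv_app_nth)
    moreover have "hd (take (Suc J) p) = p ! 0" using J h0 by simp
    ultimately show "E (last (take (Suc J) p)) (hd (take (Suc J) p))" using J sym by simp
  qed
  then show ?thesis by blast
qed

lemma forest_edges:
  assumes fin: "finite S" and sym: "\<forall>x y. E x y \<longrightarrow> E y x" and irr: "\<forall>x. \<not> E x x"
  shows "\<not> (\<exists>cs. is_cycle S E cs) \<Longrightarrow> card {(x,y). x\<in>S \<and> y\<in>S \<and> E x y} \<le> 2 * card S - 2"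
  using fin
proof (induction S rule: finite_remove_induct)
  case empty
  then show ?case by simp
next
  case (remove A)
  have finA: "finite A" by fact
  obtain v where v: "v \<in> A" and vd: "\<not> (\<exists>u w. u\<in>A \<and> w\<in>A \<and> u\<noteq>w \<and> E v u \<and> E v w)"
    using cycle_exists[OF remove(1) remove(2) sym irr] remove(5) by blast
  obtain u where u: "\<forall>y\<in>A. E v y \<longrightarrow> y = u" using vd by blast
  have ac: "\<not> (\<exists>cs. is_cycle (A - {v}) E cs)" using remove(5) cycle_mono[of "A - {v}" E _ A] by blast
  have IH: "card {(x,y). x\<in>A-{v} \<and> y\<in>A-{v} \<and> E x y} \<le> 2 * card (A-{v}) - 2"
    using remove(4)[OF v ac] .
  have sub: "{(x,y). x\<in>A \<and> y\<in>A \<and> E x y} \<subseteq> {(x,y). x\<in>A-{v} \<and> y\<in>A-{v} \<and> E x y} \<union> {(v,u),(u,v)}"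
    using u sym by auto
  have fin2: "finite {(x,y). x\<in>A-{v} \<and> y\<in>A-{v} \<and> E x y}"
    by (rule finite_subset[of _ "A \<times> A"]) (use finA in auto)
  have "card {(x,y). x\<in>A \<and> y\<in>A \<and> E x y} \<le> card ({(x,y). x\<in>A-{v} \<and> y\<in>A-{v} \<and> E x y} \<union> {(v,u),(u,v)})"
    by (rule card_mono[OF _ sub]) (use fin2 in simp)
  also have "\<dots> \<le> card {(x,y). x\<in>A-{v} \<and> y\<in>A-{v} \<and> E x y} + card {(v,u),(u,v)}"
    by (rule card_Un_le)
  also have "\<dots> \<le> card {(x,y). x\<in>A-{v} \<and> y\<in>A-{v} \<and> E x y} + 2"
    using card_insert_le_m1[of 2 "{(u,v)}" "(v,u)"] by (simp add: card_insert_if)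
  finally have le: "card {(x,y). x\<in>A \<and> y\<in>A \<and> E x y} \<le> card {(x,y). x\<in>A-{v} \<and> y\<in>A-{v} \<and> E x y} + 2" .
  show ?case
  proof (cases "A = {v}")
    case True
    then have "{(x,y). x\<in>A \<and> y\<in>A \<and> E x y} = {}" using irr by auto
    then show ?thesis by (metis card.empty zero_le)
  next
    case False
    then have "card (A - {v}) \<ge> 1" using v finA
      by (metis One_nat_def Suc_leI card_gt_0_iff finite_Diff insert_Diff remove(2) Diff_eq_empty_iff subset_singletonD)
    moreover have "card A = card (A - {v}) + 1" proof -
      have "card A > 0" using v finA card_gt_0_iff by blast
      then show ?thesis using v finA by (simp add: card_Diff_singleton_if)
    qed
    ultimately show ?thesis using le IH by linarith
  qed
qed

lemma arith_int:
  fixes a b n m :: int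
  assumes "a + b \<ge> n + 2" "a \<le> n" "b \<le> n" "2*m \<le> 2*a+2*b - 2"
    "a*(n+2) \<le> 2*m + a*(2*(n-b))" "a \<le> b"
  shows False
proof -
  have a2: "a \<ge> 2" using assms by linarith
  have "a*(n+2) - a*(2*(n-b)) = a*(2*b - n + 2)" by (simp add: algebra_simps)
  moreover have "a*(2*b - n + 2) \<ge> a*(b - a + 4)"
    by (rule mult_left_mono) (use assms in linarith)+
  moreover have "(a-2)*(b-a) \<ge> 0" using a2 assms(6) by simp
  moreover have "a*(b - a + 4) = (a-2)*(b-a) + 2*a + 2*b" by (simp add: algebra_simps)
  ultimately have "a*(b - a + 4) \<le> 2*m" "a*(b - a + 4) \<ge> 2*a + 2*b" using assms(5) by linarith+
  then have "2*a + 2*b \<le> 2*m" by (meson order_trans)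
  then show False using assms(4) by linarith
qed

lemma arith_nat:
  fixes a b n m :: nat
  assumes "a + b \<ge> n + 2" "a \<le> n" "b \<le> n" "2*m \<le> 2*(a+b) - 2"
    "a*(n+2) \<le> 2*m + a*(2*(n-b))" "b*(n+2) \<le> 2*m + b*(2*(n-a))"
  shows False
proof (cases "a \<le> b")
  case True
  obtain d where d: "n = b + d" using assms(3) le_Suc_ex by blast
  have "a*(n+2) \<le> 2*m + a*(2*d)" using assms(5) d by simp
  then have "int (a*(n+2)) \<le> int (2*m + a*(2*d))" by (simp only: of_nat_le_iff)
  then have "int a*(int n+2) \<le> 2*int m + int a*(2*int d)" by (simp add: algebra_simps)
  moreover have "int d = int n - int b" using d by simp
  ultimately have e: "int a*(int n+2) \<le> 2*int m + int a*(2*(int n-int b))" by simp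
  have f: "2*int m \<le> 2*int a+2*int b - 2" using assms(1,4) by arith
  show False using arith_int[where a="int a" and b="int b" and n="int n" and m="int m"] e f assms True by linarith
next
  case False
  obtain d where d: "n = a + d" using assms(2) le_Suc_ex by blast
  have "b*(n+2) \<le> 2*m + b*(2*d)" using assms(6) d by simp
  then have "int (b*(n+2)) \<le> int (2*m + b*(2*d))" by (simp only: of_nat_le_iff)
  then have "int b*(int n+2) \<le> 2*int m + int b*(2*int d)" by (simp add: algebra_simps)
  moreover have "int d = int n - int a" using d by simp
  ultimately have e: "int b*(int n+2) \<le> 2*int m + int b*(2*(int n-int a))" by simp
  have f: "2*int m \<le> 2*int b+2*int a - 2" using assms(1,4) by arith
  show False using arith_int[where a="int b" and b="int a" and n="int n" and m="int m"] e f assms False by linarith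
qed

lemma upper:
  assumes bb: "balanced_bipartite n V1 V2 E"
    and deg: "\<forall>x\<in>V1\<union>V2. n+2 \<le> 2 * degree (V1\<union>V2) E x"
    and SV: "S \<subseteq> V1\<union>V2" and ac: "\<not>(\<exists>cs. is_cycle S E cs)"
  shows "card S \<le> n+1"
proof (rule ccontr)
  assume "\<not> ?thesis"
  hence big: "card S \<ge> n+2" by simp
  have fin: "finite (V1\<union>V2)" and sym: "\<forall>x y. E x y \<longrightarrow> E y x" and irr: "\<forall>x. \<not> E x x"
    and disj: "V1 \<inter> V2 = {}" and c1: "card V1 = n" and c2: "card V2 = n"
    and bip: "\<forall>x y. E x y \<longrightarrow> (x \<in> V1 \<and> y \<in> V2) \<or> (x \<in> V2 \<and> y \<in> V1)"
    using bb unfolding balanced_bipartite_def simple_graph_def by auto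
  have f1: "finite V1" "finite V2" using fin by auto
  define A where "A = S \<inter> V1"
  define B where "B = S \<inter> V2"
  have finS: "finite S" using SV fin finite_subset by blast
  have fA: "finite A" "finite B" unfolding A_def B_def using finS by auto
  have SAB: "S = A \<union> B" "A \<inter> B = {}" unfolding A_def B_def using SV disj by auto
  have cS: "card S = card A + card B" using SAB fA card_Un_disjoint by metis
  have cA: "card A \<le> n" using card_mono[OF f1(1), of A] c1 unfolding A_def by auto
  have cB: "card B \<le> n" using card_mono[OF f1(2), of B] c2 unfolding B_def by auto
  define M where "M = Sigma A (\<lambda>x. {y\<in>B. E x y})"
  define M' where "M' = Sigma B (\<lambda>y. {x\<in>A. E x y})"
  define sw where "sw = (\<lambda>(x::'a,y::'a). (y,x))"
  have swinj: "inj_on sw X" for X unfolding sw_def by (auto simp: inj_on_def)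
  have PS: "{(x,y). x\<in>S \<and> y\<in>S \<and> E x y} = M \<union> sw ` M"
  proof
    show "{(x,y). x\<in>S \<and> y\<in>S \<and> E x y} \<subseteq> M \<union> sw ` M"
    proof
      fix p assume "p \<in> {(x,y). x\<in>S \<and> y\<in>S \<and> E x y}"
      then obtain x y where p: "p = (x,y)" "x\<in>S" "y\<in>S" "E x y" by blast
      show "p \<in> M \<union> sw ` M"
      proof (cases "x \<in> V1 \<and> y \<in> V2")
        case True
        then show ?thesis using p unfolding M_def A_def B_def by auto
      next
        case False
        then have "y \<in> V1 \<and> x \<in> V2" using bip p by blast
        then have "(y,x) \<in> M" using p sym unfolding M_def A_def B_def by auto
        moreover have "p = sw (y,x)" using p sw_def by simp
        ultimately show ?thesis by blast
      qed
    qed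
  next
    show "M \<union> sw ` M \<subseteq> {(x,y). x\<in>S \<and> y\<in>S \<and> E x y}"
      unfolding M_def A_def B_def sw_def using sym by auto
  qed
  have dis: "M \<inter> sw ` M = {}" unfolding M_def sw_def using SAB(2) by auto
  have fM: "finite M" unfolding M_def using fA by auto
  have cP: "card {(x,y). x\<in>S \<and> y\<in>S \<and> E x y} = 2 * card M"
    unfolding PS using card_Un_disjoint[OF fM _ dis] fM card_image[OF swinj[of M]] by simp
  have forest: "card {(x,y). x\<in>S \<and> y\<in>S \<and> E x y} \<le> 2 * card S - 2"
    using forest_edges[OF finS sym irr] ac by blast
  have MM': "M = sw ` M'" unfolding M_def M'_def sw_def by auto
  have cM: "card M = (\<Sum>x\<in>A. card {y\<in>B. E x y})" unfolding M_def using fA by simp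
  have cM': "card M = (\<Sum>y\<in>B. card {x\<in>A. E x y})"
    unfolding MM' card_image[OF swinj] M'_def using fA by simp
  have dA: "n+2 \<le> 2 * card {y\<in>B. E x y} + 2*(n - card B)" if x: "x \<in> A" for x
  proof -
    have "{u\<in>V1\<union>V2. E x u} \<subseteq> {y\<in>B. E x y} \<union> (V2 - B)"
      using x bip disj unfolding A_def B_def by auto
    then have "degree (V1\<union>V2) E x \<le> card ({y\<in>B. E x y} \<union> (V2 - B))"
      unfolding degree_def using f1 fA by (intro card_mono) auto
    also have "\<dots> \<le> card {y\<in>B. E x y} + card (V2 - B)" by (rule card_Un_le)
    also have "card (V2 - B) = n - card B" using c2 fA card_Diff_subset[of B V2] unfolding B_def by auto
    finally have "degree (V1\<union>V2) E x \<le> card {y\<in>B. E x y} + (n - card B)" .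
    moreover have "n+2 \<le> 2 * degree (V1\<union>V2) E x" using deg x unfolding A_def by blast
    ultimately show ?thesis by linarith
  qed
  have dB: "n+2 \<le> 2 * card {x\<in>A. E x y} + 2*(n - card A)" if y: "y \<in> B" for y
  proof -
    have "{u\<in>V1\<union>V2. E y u} \<subseteq> {x\<in>A. E x y} \<union> (V1 - A)"
      using y bip disj sym unfolding A_def B_def by auto
    then have "degree (V1\<union>V2) E y \<le> card ({x\<in>A. E x y} \<union> (V1 - A))"
      unfolding degree_def using f1 fA by (intro card_mono) auto
    also have "\<dots> \<le> card {x\<in>A. E x y} + card (V1 - A)" by (rule card_Un_le)
    also have "card (V1 - A) = n - card A" using c1 fA card_Diff_subset[of A V1] unfolding A_def by auto
    finally have "degree (V1\<union>V2) E y \<le> card {x\<in>A. E x y} + (n - card A)" .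
    moreover have "n+2 \<le> 2 * degree (V1\<union>V2) E y" using deg y unfolding B_def by blast
    ultimately show ?thesis by linarith
  qed
  have sA: "card A * (n+2) \<le> 2 * card M + card A * (2*(n - card B))"
  proof -
    have "(\<Sum>x\<in>A. n+2) \<le> (\<Sum>x\<in>A. 2 * card {y\<in>B. E x y} + 2*(n - card B))"
      by (rule sum_mono) (rule dA)
    then show ?thesis unfolding cM by (simp add: sum.distrib sum_distrib_left)
  qed
  have sB: "card B * (n+2) \<le> 2 * card M + card B * (2*(n - card A))"
  proof -
    have "(\<Sum>y\<in>B. n+2) \<le> (\<Sum>y\<in>B. 2 * card {x\<in>A. E x y} + 2*(n - card A))"
      by (rule sum_mono) (rule dB)
    then show ?thesis unfolding cM' by (simp add: sum.distrib sum_distrib_left)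
  qed
  show False
    using arith_nat[where a="card A" and b="card B" and n=n and m="card M"] big cS cA cB forest cP sA sB
    by simp
qed

lemma lower:
  assumes bb: "balanced_bipartite n V1 V2 E" and n: "n > 0"
  shows "\<exists>S. induces_forest (V1\<union>V2) E S \<and> card S = n+1"
proof -
  have fin: "finite (V1\<union>V2)" and disj: "V1 \<inter> V2 = {}" and c1: "card V1 = n" and c2: "card V2 = n"
    and bip: "\<forall>x y. E x y \<longrightarrow> (x \<in> V1 \<and> y \<in> V2) \<or> (x \<in> V2 \<and> y \<in> V1)"
    using bb unfolding balanced_bipartite_def simple_graph_def by auto
  obtain v where v: "v \<in> V2" using c2 n by (metis card.empty ex_in_conv less_irrefl)
  define S where "S = insert v V1"
  have vn: "v \<notin> V1" using v disj by blast
  have cS: "card S = n+1" unfolding S_def using vn c1 fin by simp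
  have key: "(x = v \<and> y \<in> V1) \<or> (y = v \<and> x \<in> V1)" if "x \<in> S" "y \<in> S" "E x y" for x y
    using that bip disj vn unfolding S_def by blast
  have nocyc: "\<not> is_cycle S E cs" for cs
  proof
    assume c: "is_cycle S E cs"
    then have L: "length cs \<ge> 3" and d: "distinct cs" and sS: "set cs \<subseteq> S"
      and e: "\<forall>i < length cs - 1. E (cs ! i) (cs ! Suc i)" and lh: "E (last cs) (hd cs)"
      unfolding is_cycle_def by auto
    have inS: "cs ! i \<in> S" if "i < length cs" for i using sS that nth_mem by blast
    have l0: "0 < length cs" and l1: "1 < length cs" and l2: "2 < length cs" using L by auto
    have s0: "cs!0 \<in> S" and s1: "cs!1 \<in> S" and s2: "cs!2 \<in> S" using inS l0 l1 l2 by auto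
    have e01: "E (cs!0) (cs!1)" using e L by simp
    have e12: "E (cs!1) (cs!2)" using e L by (simp add: numeral_2_eq_2)
    have d02: "cs!0 \<noteq> cs!2" proof -
      have "cs!0 = cs!2 \<longleftrightarrow> (0::nat) = 2" by (rule nth_eq_iff_index_eq[OF d]) (use L in auto)
      then show ?thesis by simp
    qed
    have d13: "length cs \<ge> 4 \<Longrightarrow> cs!1 \<noteq> cs!3" proof -
      assume "length cs \<ge> 4"
      then have "cs!1 = cs!3 \<longleftrightarrow> (1::nat) = 3" by (intro nth_eq_iff_index_eq[OF d]) auto
      then show ?thesis by simp
    qed
    show False
    proof (cases "cs!1 = v")
      case True
      have a0: "cs!0 \<in> V1" using key[OF s0 s1 e01] True vn L by auto
      have a2: "cs!2 \<in> V1" using key[OF s1 s2 e12] True vn L by auto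
      show False
      proof (cases "length cs = 3")
        case True
        have "cs \<noteq> []" using l0 by auto
        then have "last cs = cs!(length cs - 1)" by (rule last_conv_nth)
        then have "last cs = cs!2" using True by simp
        moreover have "hd cs = cs!0" using l0 by (simp add: hd_conv_nth)
        ultimately have "E (cs!2) (cs!0)" using lh by simp
        then show False using key[OF s2 s0] a0 a2 vn by auto
      next
        case False
        then have L4: "length cs \<ge> 4" using L by simp
        have e23: "E (cs!2) (cs!3)" using e L4 by (simp add: numeral_3_eq_3 numeral_2_eq_2)
        have "cs!3 = v" using key[OF s2 inS[of 3] e23] a2 vn L4 by auto
        then show False using d13 L4 \<open>cs!1 = v\<close> by simp
      qed
    next
      case False
      have "cs!0 = v" using key[OF s0 s1 e01] False L by auto
      moreover have "cs!2 = v" using key[OF s1 s2 e12] False L by auto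
      ultimately show False using d02 by simp
    qed
  qed
  have "induces_forest (V1\<union>V2) E S" unfolding induces_forest_def S_def using v nocyc S_def by auto
  then show ?thesis using cS by blast
qed

theorem theorem1:
  fixes n :: nat and V1 V2 :: "'a set" and E :: "'a \<Rightarrow> 'a \<Rightarrow> bool"
  assumes "n > 0"
    and "balanced_bipartite n V1 V2 E"
    and "2 * min_degree (V1 \<union> V2) E \<ge> n + 2"
  shows "forest_number (V1 \<union> V2) E = n + 1"
proof -
  have fin: "finite (V1\<union>V2)" using assms(2) unfolding balanced_bipartite_def simple_graph_def by auto
  have deg: "\<forall>x\<in>V1\<union>V2. n+2 \<le> 2 * degree (V1\<union>V2) E x"
  proof
    fix x assume x: "x \<in> V1\<union>V2"
    have "min_degree (V1\<union>V2) E \<le> degree (V1\<union>V2) E x"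
      unfolding min_degree_def using fin x by (intro Min_le) auto
    then show "n+2 \<le> 2 * degree (V1\<union>V2) E x" using assms(3) by linarith
  qed
  define F where "F = {S. induces_forest (V1\<union>V2) E S}"
  have fF: "finite F" unfolding F_def induces_forest_def
    by (rule finite_subset[of _ "Pow (V1\<union>V2)"]) (use fin in auto)
  have ub: "\<forall>k\<in>card ` F. k \<le> n+1"
    unfolding F_def induces_forest_def using upper[OF assms(2) deg] by auto
  obtain S where S: "induces_forest (V1\<union>V2) E S" "card S = n+1" using lower[OF assms(2) assms(1)] by blast
  have "n+1 \<in> card ` F" unfolding F_def using S by force
  then have "Max (card ` F) = n+1" using fF ub by (intro Max_eqI) auto
  then show ?thesis unfolding forest_number_def F_def .
qed

end
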